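(* Consider the max-min problem: maximize $t$ over $t$, $\mathbf{E}=(E_1,\dots,E_K)$, $\boldsymbol\tau=(\tau_0,\dots,\tau_K)$ subject to $R_i(E_i,\tau_i)\ge t$ for $i=1,\dots,K$, $\sum_{i=0}^K\tau_i\le 1$, $\sum_{i=1}^KE_i\le E_{max}$, $\tau_i\ge0$ for $i=0,\dots,K$, and $0\le E_i\le E_i^b+\eta_iP_Bh_i\tau_0$ for $i=1,\dots,K$. Then the optimal policy $(t^*,\mathbf E^*,\boldsymbol\tau^* )$ satisfies $R_i(E_i^*,\tau_i^* )=t^*$ for every $i=1,\dots,K$, i.e., all users achieve the same throughput.
   Context: Fix an integer $K\ge 1$ and positive constants $E_{max}$, $P_B$, and, for $i=1,\dots,K$, $E_i^b\ge 0$, $\eta_i\in(0,1)$, $h_i>0$, $g_i>0$, $\Gamma>0$, $\sigma^2>0$. Let $\alpha_i = g_i/(\Gamma\sigma^2)$. For $E_i\ge 0$, $\tau_i\ge 0$ define $R_i(E_i,\tau_i)=\tau_i\log_2\!\left(1+\alpha_i E_i/\tau_i\right)$ for $\tau_i>0$ and $R_i(E_i,0)=0$. *)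

theory Defs
  imports Complex_Main
begin

definition rate :: "real \<Rightarrow> real \<Rightarrow> real \<Rightarrow> real \<Rightarrow> real \<Rightarrow> real" where
  "rate g Gamma sigma2 E tau =
     (if tau > 0 then tau * log 2 (1 + (g / (Gamma * sigma2)) * E / tau) else 0)"

definition feasible ::
  "nat \<Rightarrow> real \<Rightarrow> real \<Rightarrow> (nat \<Rightarrow> real) \<Rightarrow> (nat \<Rightarrow> real) \<Rightarrow> (nat \<Rightarrow> real)
   \<Rightarrow> (nat \<Rightarrow> real) \<Rightarrow> real \<Rightarrow> real
   \<Rightarrow> real \<Rightarrow> (nat \<Rightarrow> real) \<Rightarrow> (nat \<Rightarrow> real) \<Rightarrow> bool" where
  "feasible K Emax PB Eb eta h g Gamma sigma2 t E tau \<longleftrightarrow>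
     (\<forall>i\<in>{1..K}. rate (g i) Gamma sigma2 (E i) (tau i) \<ge> t) \<and>
     (\<Sum>i=0..K. tau i) \<le> 1 \<and>
     (\<Sum>i=1..K. E i) \<le> Emax \<and>
     (\<forall>i\<in>{0..K}. tau i \<ge> 0) \<and>
     (\<forall>i\<in>{1..K}. 0 \<le> E i \<and> E i \<le> Eb i + eta i * PB * h i * tau 0)"

definition optimal ::
  "nat \<Rightarrow> real \<Rightarrow> real \<Rightarrow> (nat \<Rightarrow> real) \<Rightarrow> (nat \<Rightarrow> real) \<Rightarrow> (nat \<Rightarrow> real)
   \<Rightarrow> (nat \<Rightarrow> real) \<Rightarrow> real \<Rightarrow> real
   \<Rightarrow> real \<Rightarrow> (nat \<Rightarrow> real) \<Rightarrow> (nat \<Rightarrow> real) \<Rightarrow> bool" where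
  "optimal K Emax PB Eb eta h g Gamma sigma2 t E tau \<longleftrightarrow>
     feasible K Emax PB Eb eta h g Gamma sigma2 t E tau \<and>
     (\<forall>t' E' tau'. feasible K Emax PB Eb eta h g Gamma sigma2 t' E' tau' \<longrightarrow> t' \<le> t)"

end

theory Submission imports Defs begin

lemma fmono:
  fixes b s s' :: real
  assumes b: "b > 0" and s: "0 < s" "s < s'"
  shows "s * ln (1 + b/s) < s' * ln (1 + b/s')"
proof -
  define A where "A = 1 + b/s'"
  define B where "B = 1 + b/s"
  have s'p: "s' > 0" using s by simp
  have A1: "A > 1" using b s'p by (simp add: A_def)
  have Bp: "B > 0" using b s by (simp add: B_def add_pos_pos)
  have lA: "ln A > (A - 1)/A"
    using ln_diff_less[of 1 A] A1 by (simp add: diff_divide_distrib)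
  have lBA: "ln B - ln A \<le> (B - A)/A" using ln_diff_le[of B A] A1 Bp by simp
  have key: "s * (B - A) = (s' - s) * (A - 1)"
    using s s'p by (simp add: A_def B_def field_simps)
  have Ap: "A > 0" using A1 by simp
  have "s * ln B \<le> s * ln A + s * ((B - A)/A)"
  proof -
    have "s * (ln B - ln A) \<le> s * ((B - A)/A)" using mult_left_mono[OF lBA, of s] s by linarith
    then show ?thesis by (simp add: algebra_simps)
  qed
  also have "s * ((B - A)/A) = (s' - s) * ((A - 1)/A)" using key by (simp add: field_simps)
  also have "(s' - s) * ((A - 1)/A) < (s' - s) * ln A" using mult_strict_left_mono[OF lA, of "s' - s"] s by simp
  finally show ?thesis by (simp add: A_def B_def algebra_simps)
qed

lemma rate_mono:
  assumes "a > 0" "Gamma > 0" "sigma2 > 0" "E > 0" "0 < s" "s < s'"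
  shows "rate a Gamma sigma2 E s < rate a Gamma sigma2 E s'"
proof -
  have bp: "a / (Gamma * sigma2) * E > 0" using assms by simp
  have "s * ln (1 + (a / (Gamma * sigma2) * E)/s) < s' * ln (1 + (a / (Gamma * sigma2) * E)/s')"
    by (rule fmono[OF bp assms(5,6)])
  then have "s * ln (1 + (a / (Gamma * sigma2) * E)/s) / ln 2 < s' * ln (1 + (a / (Gamma * sigma2) * E)/s') / ln 2"
    by (simp add: divide_strict_right_mono)
  then show ?thesis using assms by (simp add: rate_def log_def)
qed

lemma rate_scale:
  assumes "a > 0" "Gamma > 0" "sigma2 > 0" "E \<ge> 0" "0 < s" "0 < c" "c \<le> 1"
  shows "c * rate a Gamma sigma2 E s \<le> rate a Gamma sigma2 E (c*s)"
proof -
  define b where "b = a / (Gamma * sigma2) * E"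
  have b0: "b \<ge> 0" using assms by (simp add: b_def)
  have le: "b / s \<le> b / (c*s)" using assms b0
    by (simp add: divide_left_mono mult_le_cancel_right1 mult_pos_pos)
  have p: "1 + b/s > 0" using b0 assms by (simp add: add_pos_nonneg)
  have "log 2 (1 + b/s) \<le> log 2 (1 + b/(c*s))" using le p by simp
  then have "c*s * log 2 (1 + b/s) \<le> c*s * log 2 (1 + b/(c*s))"
    using assms by (simp add: mult_left_mono)
  then show ?thesis using assms by (simp add: rate_def b_def mult.assoc)
qed

lemma rate_pos:
  assumes "rate a Gamma sigma2 E s > 0" "E \<ge> 0"
  shows "s > 0 \<and> E > 0"
  using assms by (cases "s > 0"; cases "E = 0") (auto simp: rate_def)

lemma rate_pos_simple:
  assumes "a > 0" "Gamma > 0" "sigma2 > 0" "E > 0" "s > 0"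
  shows "rate a Gamma sigma2 E s > 0"
proof -
  have "a / (Gamma * sigma2) * E / s > 0" using assms by simp
  then have "1 + a / (Gamma * sigma2) * E / s > 1" by simp
  then have "log 2 (1 + a / (Gamma * sigma2) * E / s) > 0" by simp
  then show ?thesis using assms by (simp add: rate_def)
qed

theorem theorem5:
  fixes K :: nat and Emax PB Gamma sigma2 :: real
    and Eb eta h g :: "nat \<Rightarrow> real"
    and t :: real and E tau :: "nat \<Rightarrow> real"
  assumes "K \<ge> 1" and "Emax > 0" and "PB > 0" and "Gamma > 0" and "sigma2 > 0"
    and "\<forall>i\<in>{1..K}. Eb i \<ge> 0 \<and> 0 < eta i \<and> eta i < 1 \<and> h i > 0 \<and> g i > 0"
    and "optimal K Emax PB Eb eta h g Gamma sigma2 t E tau"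
  shows "\<forall>i\<in>{1..K}. rate (g i) Gamma sigma2 (E i) (tau i) = t"
proof -
  note A = assms
  have F: "feasible K Emax PB Eb eta h g Gamma sigma2 t E tau"
    and M: "\<And>t' E' tau'. feasible K Emax PB Eb eta h g Gamma sigma2 t' E' tau' \<Longrightarrow> t' \<le> t"
    using assms(7) unfolding optimal_def by auto
  have Kp: "real K > 0" using A(1) by simp
  have ne: "{1..K} \<noteq> {}" using A(1) by simp
  have tpos: "t > 0"
  proof -
    define tau0 where "tau0 = (\<lambda>j::nat. if j = 0 then 1/2 else 1/(2*real K))"
    define E0 where "E0 = (\<lambda>j. min (Emax / real K) (eta j * PB * h j / 2))"
    define t0 where "t0 = Min ((\<lambda>j. rate (g j) Gamma sigma2 (E0 j) (tau0 j)) ` {1..K})"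
    have rp: "rate (g j) Gamma sigma2 (E0 j) (tau0 j) > 0" if "j \<in> {1..K}" for j
    proof -
      have "E0 j > 0" using A that Kp unfolding E0_def by auto
      moreover have "tau0 j > 0" using that Kp unfolding tau0_def by auto
      ultimately show ?thesis using rate_pos_simple A that by auto
    qed
    have t0p: "t0 > 0" unfolding t0_def using rp ne by (subst Min_gr_iff) auto
    have "feasible K Emax PB Eb eta h g Gamma sigma2 t0 E0 tau0"
      unfolding feasible_def
    proof (intro conjI ballI)
      fix i assume "i \<in> {1..K}"
      then show "t0 \<le> rate (g i) Gamma sigma2 (E0 i) (tau0 i)" unfolding t0_def by simp
    next
      have "(\<Sum>i=0..K. tau0 i) = tau0 0 + (\<Sum>i=1..K. tau0 i)"
        by (simp add: sum.atLeast_Suc_atMost)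
      also have "(\<Sum>i=1..K. tau0 i) = (\<Sum>i=1..K. 1/(2*real K))"
        by (rule sum.cong) (auto simp: tau0_def)
      also have "\<dots> = 1/2" using Kp by simp
      finally show "(\<Sum>i=0..K. tau0 i) \<le> 1" by (simp add: tau0_def)
    next
      have "(\<Sum>i=1..K. E0 i) \<le> (\<Sum>i=1..K. Emax / real K)"
        by (rule sum_mono) (simp add: E0_def)
      also have "\<dots> = Emax" using Kp by simp
      finally show "(\<Sum>i=1..K. E0 i) \<le> Emax" .
    next
      fix i assume "i \<in> {0..K}" then show "tau0 i \<ge> 0" using Kp by (simp add: tau0_def)
    next
      fix i assume i: "i \<in> {1..K}"
      have "E0 i > 0" using A i Kp unfolding E0_def by auto
      moreover have "E0 i \<le> Eb i + eta i * PB * h i * tau0 0"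
      proof -
        have "Eb i \<ge> 0" using A(6) i by auto
        then have "eta i * PB * h i / 2 \<le> Eb i + eta i * PB * h i * tau0 0" by (simp add: tau0_def)
        then show ?thesis unfolding E0_def using min.cobounded2[of "Emax / real K" "eta i * PB * h i / 2"] by linarith
      qed
      ultimately show "0 \<le> E0 i" "E0 i \<le> Eb i + eta i * PB * h i * tau0 0" by simp_all
    qed
    then have "t0 \<le> t" by (rule M)
    then show ?thesis using t0p by simp
  qed
  show ?thesis
  proof (rule ccontr)
    assume "\<not> ?thesis"
    then obtain i where i: "i \<in> {1..K}" and ne_t: "rate (g i) Gamma sigma2 (E i) (tau i) \<noteq> t"
      by blast
    define r where "r = rate (g i) Gamma sigma2 (E i) (tau i)"
    have rge: "\<And>j. j \<in> {1..K} \<Longrightarrow> rate (g j) Gamma sigma2 (E j) (tau j) \<ge> t"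
      and Enn: "\<And>j. j \<in> {1..K} \<Longrightarrow> E j \<ge> 0"
      and tnn: "\<And>j. j \<in> {0..K} \<Longrightarrow> tau j \<ge> 0"
      and sumt: "(\<Sum>i=0..K. tau i) \<le> 1"
      and sumE: "(\<Sum>i=1..K. E i) \<le> Emax"
      and Eub: "\<And>j. j \<in> {1..K} \<Longrightarrow> E j \<le> Eb j + eta j * PB * h j * tau 0"
      using F unfolding feasible_def by auto
    have rt: "r > t" using rge[OF i] ne_t unfolding r_def by simp
    have rp: "r > 0" using rt tpos by simp
    have posi: "tau i > 0 \<and> E i > 0" using rate_pos[of "g i" Gamma sigma2 "E i" "tau i"] rp Enn[OF i]
      unfolding r_def by simp
    define c where "c = (1 + t/r)/2"
    have c0: "0 < c" "c < 1" using rp rt tpos unfolding c_def by (auto simp: field_simps)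
    have cr: "c * r > t" using rp rt unfolding c_def by (simp add: field_simps)
    define d where "d = (1 - c) * tau i / (real K + 1)"
    have dp: "d > 0" using c0 posi unfolding d_def by simp
    define tau' where "tau' = (\<lambda>j. if j = i then c * tau i else if j \<in> {1..K} then tau j + d else tau j)"
    define t' where "t' = Min ((\<lambda>j. rate (g j) Gamma sigma2 (E j) (tau' j)) ` {1..K})"
    have gt: "rate (g j) Gamma sigma2 (E j) (tau' j) > t" if j: "j \<in> {1..K}" for j
    proof (cases "j = i")
      case True
      have "c * r \<le> rate (g i) Gamma sigma2 (E i) (c * tau i)"
        unfolding r_def using rate_scale[of "g i" Gamma sigma2 "E i" "tau i" c] A(4,5,6) i posi c0
        by auto
      then show ?thesis using True cr unfolding tau'_def by simp
    next
      case False
      have "rate (g j) Gamma sigma2 (E j) (tau j) > 0" using rge[OF j] tpos by simp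
      then have pj: "tau j > 0 \<and> E j > 0" using rate_pos Enn[OF j] by blast
      have "rate (g j) Gamma sigma2 (E j) (tau j) < rate (g j) Gamma sigma2 (E j) (tau j + d)"
        using rate_mono[of "g j" Gamma sigma2 "E j" "tau j" "tau j + d"] A(4,5,6) j pj dp by auto
      then show ?thesis using rge[OF j] False j unfolding tau'_def by simp
    qed
    have t'gt: "t' > t" unfolding t'_def using gt ne by (subst Min_gr_iff) auto
    have "feasible K Emax PB Eb eta h g Gamma sigma2 t' E tau'"
      unfolding feasible_def
    proof (intro conjI ballI)
      fix j assume "j \<in> {1..K}"
      then show "t' \<le> rate (g j) Gamma sigma2 (E j) (tau' j)" unfolding t'_def by simp
    next
      have "(\<Sum>j=0..K. tau' j) \<le> (\<Sum>j=0..K. tau j + d - (if j = i then (1 - c) * tau i + d else 0))"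
        by (rule sum_mono) (use dp in \<open>auto simp: tau'_def algebra_simps\<close>)
      also have "\<dots> = (\<Sum>j=0..K. tau j) + (real K + 1) * d - ((1 - c) * tau i + d)"
        using i by (simp add: sum_subtractf sum.distrib)
      also have "\<dots> = (\<Sum>j=0..K. tau j) - d"
      proof -
        have "(real K + 1) * d = (1 - c) * tau i" unfolding d_def by simp
        then show ?thesis by linarith
      qed
      finally show "(\<Sum>j=0..K. tau' j) \<le> 1" using sumt dp by simp
    next
      show "(\<Sum>j=1..K. E j) \<le> Emax" by (rule sumE)
    next
      fix j assume j: "j \<in> {0..K}"
      show "tau' j \<ge> 0" using tnn[OF j] c0 posi dp unfolding tau'_def by auto
    next
      fix j assume j: "j \<in> {1..K}"
      have t0eq: "tau' 0 = tau 0" using i unfolding tau'_def by auto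
      show "0 \<le> E j" using Enn[OF j] .
      show "E j \<le> Eb j + eta j * PB * h j * tau' 0" unfolding t0eq by (rule Eub[OF j])
    qed
    then have "t' \<le> t" by (rule M)
    then show False using t'gt by simp
  qed
qed

end
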